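(* Let \[ q_1 = \tfrac{1}{3}(-1, 2, 2)^T,\quad q_2 = \tfrac13 (2,-1,2)^T,\quad q_3 = \tfrac13 (2,2,-1)^T \in \mathbb{R}^3 . \] For every $z \in \{\pm1\}^3$ whose entries are not all equal and every real $3\times 3$ diagonal matrix $X$, \[ \Big\| X + \sum_{i=1}^3 z(i)\, q_i q_i^{T} \Big\| \geq 1, \] where $\|\cdot\|$ denotes the operator norm (induced by the Euclidean norm). *)

theory Defs
  imports "HOL-Analysis.Analysis"
begin

definition q :: "3 \<Rightarrow> real^3" where
  "q i = (if i = 1 then (1/3) *\<^sub>R vector [-1, 2, 2]
          else if i = 2 then (1/3) *\<^sub>R vector [2, -1, 2]
          else (1/3) *\<^sub>R vector [2, 2, -1])"

definition outer :: "real^'n \<Rightarrow> real^'m \<Rightarrow> real^'m^'n" where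
  "outer u v = (\<chi> i j. u $ i * v $ j)"

definition opnorm :: "real^'n^'m \<Rightarrow> real" where
  "opnorm A = onorm (\<lambda>x. A *v x)"

definition is_diag :: "real^'n^'n \<Rightarrow> bool" where
  "is_diag X \<longleftrightarrow> (\<forall>i j. i \<noteq> j \<longrightarrow> X $ i $ j = 0)"

end

theory Submission
  imports Defs
begin


lemma diag_mult: assumes "is_diag X" shows "(X *v v) $ j = X$j$j * v$j"
proof -
  have "(X *v v) $ j = (\<Sum>i\<in>UNIV. X$j$i * v$i)" by (simp add: matrix_vector_mult_def)
  also have "\<dots> = (\<Sum>i\<in>{j}. X$j$i * v$i)"
    by (rule sum.mono_neutral_right) (use assms in \<open>auto simp: is_diag_def\<close>)
  finally show ?thesis by simp
qed

lemma one_vec: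
  fixes A X :: "real^'n^'n" and v :: "real^'n"
  assumes "is_diag X" and "norm (A *v v) = norm v"
  shows "(\<Sum>j\<in>UNIV. X$j$j * ((A *v v)$j * v$j)) + norm v ^ 2 \<le> opnorm (X + A) * norm v ^ 2"
proof -
  have "(A *v v) \<bullet> ((X + A) *v v) = (A *v v) \<bullet> (X *v v) + norm v ^ 2"
    using assms(2) by (simp add: matrix_vector_mult_add_rdistrib inner_add_right power2_norm_eq_inner) (metis power2_norm_eq_inner)
  moreover have "(A *v v) \<bullet> (X *v v) = (\<Sum>j\<in>UNIV. X$j$j * ((A *v v)$j * v$j))"
    by (simp add: inner_vec_def diag_mult[OF assms(1)] algebra_simps)
  moreover have "(A *v v) \<bullet> ((X + A) *v v) \<le> norm (A *v v) * norm ((X + A) *v v)"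
    by (rule norm_cauchy_schwarz)
  moreover have "norm ((X + A) *v v) \<le> opnorm (X + A) * norm v"
    unfolding opnorm_def by (rule onorm) simp
  ultimately show ?thesis using assms(2)
    by (smt (verit, best) mult_left_mono norm_ge_zero power2_eq_square mult.assoc mult.commute)
qed

lemma key:
  fixes A X :: "real^'n^'n" and va vb vc :: "real^'n"
  assumes "is_diag X"
    and "norm (A *v va) = norm va" "norm (A *v vb) = norm vb" "norm (A *v vc) = norm vc"
    and "\<And>j. ca * ((A *v va)$j * va$j) + cb * ((A *v vb)$j * vb$j) + cc * ((A *v vc)$j * vc$j) = 0"
    and "ca \<ge> 0" "cb \<ge> 0" "cc \<ge> 0"
    and "ca * norm va ^ 2 + cb * norm vb ^ 2 + cc * norm vc ^ 2 > 0"
  shows "opnorm (X + A) \<ge> 1"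
proof -
  let ?S = "\<lambda>v. (\<Sum>j\<in>UNIV. X$j$j * ((A *v v)$j * v$j))"
  have hx1: "ca * (?S va + norm va ^ 2) \<le> ca * (opnorm (X + A) * norm va ^ 2)"
    using one_vec[OF assms(1,2)] assms(6) by (rule mult_left_mono)
  have h2: "cb * (?S vb + norm vb ^ 2) \<le> cb * (opnorm (X + A) * norm vb ^ 2)"
    using one_vec[OF assms(1,3)] assms(7) by (rule mult_left_mono)
  have h3: "cc * (?S vc + norm vc ^ 2) \<le> cc * (opnorm (X + A) * norm vc ^ 2)"
    using one_vec[OF assms(1,4)] assms(8) by (rule mult_left_mono)
  have "ca * ?S va + cb * ?S vb + cc * ?S vc
      = (\<Sum>j\<in>UNIV. X$j$j * (ca * ((A *v va)$j * va$j) + cb * ((A *v vb)$j * vb$j) + cc * ((A *v vc)$j * vc$j)))"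
    by (simp add: sum_distrib_left sum.distrib algebra_simps)
  also have "\<dots> = 0" using assms(5) by simp
  finally have "ca * ?S va + cb * ?S vb + cc * ?S vc = 0" .
  hence "ca * norm va ^ 2 + cb * norm vb ^ 2 + cc * norm vc ^ 2
     \<le> opnorm (X + A) * (ca * norm va ^ 2 + cb * norm vb ^ 2 + cc * norm vc ^ 2)"
    using hx1 h2 h3 by (simp add: algebra_simps)
  thus ?thesis using assms(9) by simp
qed


lemma case3:
  fixes z :: "real^3" and X :: "real^3^3"
  assumes "z$1 = s" "z$2 = s" "z$3 = -s" "s = 1 \<or> s = -1" "is_diag X"
  shows "opnorm (X + (\<Sum>i\<in>UNIV. z $ i *\<^sub>R outer (q i) (q i))) \<ge> 1"
  apply (rule key[where va = "vector[4,0,-1]" and vb = "vector[0,4,-1]" and vc = "vector[0,0,1]"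
      and ca = 7 and cb = 7 and cc = 18, OF assms(5)])
  using assms(1-4)
  apply (auto simp: norm_eq_sqrt_inner inner_vec_def sum_3 matrix_vector_mult_def outer_def q_def forall_3)
  subgoal for j using exhaust_3[of j] by auto
  subgoal for j using exhaust_3[of j] by auto
  done

lemma case1:
  fixes z :: "real^3" and X :: "real^3^3"
  assumes "z$1 = -s" "z$2 = s" "z$3 = s" "s = 1 \<or> s = -1" "is_diag X"
  shows "opnorm (X + (\<Sum>i\<in>UNIV. z $ i *\<^sub>R outer (q i) (q i))) \<ge> 1"
  apply (rule key[where va = "vector[-1,0,4]" and vb = "vector[-1,4,0]" and vc = "vector[1,0,0]"
      and ca = 7 and cb = 7 and cc = 18, OF assms(5)])
  using assms(1-4)
  apply (auto simp: norm_eq_sqrt_inner inner_vec_def sum_3 matrix_vector_mult_def outer_def q_def forall_3)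
  subgoal for j using exhaust_3[of j] by auto
  subgoal for j using exhaust_3[of j] by auto
  done

lemma case2:
  fixes z :: "real^3" and X :: "real^3^3"
  assumes "z$1 = s" "z$2 = -s" "z$3 = s" "s = 1 \<or> s = -1" "is_diag X"
  shows "opnorm (X + (\<Sum>i\<in>UNIV. z $ i *\<^sub>R outer (q i) (q i))) \<ge> 1"
  apply (rule key[where va = "vector[4,-1,0]" and vb = "vector[0,-1,4]" and vc = "vector[0,1,0]"
      and ca = 7 and cb = 7 and cc = 18, OF assms(5)])
  using assms(1-4)
  apply (auto simp: norm_eq_sqrt_inner inner_vec_def sum_3 matrix_vector_mult_def outer_def q_def forall_3)
  subgoal for j using exhaust_3[of j] by auto
  subgoal for j using exhaust_3[of j] by auto
  done

theorem lemma5: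
  fixes z :: "real^3" and X :: "real^3^3"
  assumes "\<forall>i. z $ i \<in> {-1, 1}"
    and "\<not> (\<forall>i j. z $ i = z $ j)"
    and "is_diag X"
  shows "opnorm (X + (\<Sum>i\<in>UNIV. z $ i *\<^sub>R outer (q i) (q i))) \<ge> 1"
proof -
  have z: "z$1 \<in> {-1,1}" "z$2 \<in> {-1,1}" "z$3 \<in> {-1,1}" using assms(1) by auto
  have ne: "\<not> (z$1 = z$2 \<and> z$2 = z$3)"
  proof
    assume h: "z$1 = z$2 \<and> z$2 = z$3"
    have "\<forall>i. z$i = z$1" unfolding forall_3 using h by simp
    with assms(2) show False by metis
  qed
  from z ne consider
      "z$1 = -1" "z$2 = 1" "z$3 = 1" | "z$1 = 1" "z$2 = -1" "z$3 = -1"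
    | "z$1 = 1" "z$2 = -1" "z$3 = 1" | "z$1 = -1" "z$2 = 1" "z$3 = -1"
    | "z$1 = 1" "z$2 = 1" "z$3 = -1" | "z$1 = -1" "z$2 = -1" "z$3 = 1"
    by auto
  then show ?thesis
  proof cases
    case 1 then show ?thesis by (intro case1[where s=1, OF _ _ _ _ assms(3)]) auto
  next
    case 2 then show ?thesis by (intro case1[where s="-1", OF _ _ _ _ assms(3)]) auto
  next
    case 3 then show ?thesis by (intro case2[where s=1, OF _ _ _ _ assms(3)]) auto
  next
    case 4 then show ?thesis by (intro case2[where s="-1", OF _ _ _ _ assms(3)]) auto
  next
    case 5 then show ?thesis by (intro case3[where s=1, OF _ _ _ _ assms(3)]) auto
  next
    case 6 then show ?thesis by (intro case3[where s="-1", OF _ _ _ _ assms(3)]) auto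
  qed
qed

end
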